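(* Let $\mathcal Y$ be finite, $X\sim\mathbb P_X$ on $\mathcal X$, $r:\mathcal X\times\mathcal Y\to[0,\infty)$ bounded with $\|r\|_\infty=\sup_{x,y}r(x,y)$, and $g:\mathcal X\times[K]\to[0,1]$ with $\mathbb E_X[g(X,k)]>0$ for all $k$. Let $\mathcal C=\{(y_c,\mathcal I_c)\}_{c\in[C]}$ and $\alpha\in[0,1]$. Let $\mathrm{OPT}$ be the optimal value of the Primal LP$(r,g,\mathbb P_X,\mathcal C,\alpha)$. 1. For any $\hat r:\mathcal X\times\mathcal Y\to[0,\infty)$, let $\varepsilon_{\hat r}=\mathbb E_X\big[\sum_{y\in\mathcal Y}|\hat r(X,y)-r(X,y)|\big]$. If $\hat\pi$ is a minimizer of the Primal LP$(\hat r,g,\mathbb P_X,\mathcal C,\alpha)$, then $\mathbb E_X\big[\sum_{y}r(X,y)\hat\pi(X,y)\big]\le\mathrm{OPT}+\varepsilon_{\hat r}$. 2. For any $\hat g:\mathcal X\times[K]\to[0,1]$ with $\mathbb E_X[\hat g(X,k)]>0$ for all $k$, let $$\varepsilon_{\hat g}=\max_{k\in[K]}\mathbb E_X\Big[\Big|\frac{\hat g(X,k)}{\mathbb E_X[\hat g(X,k)]}-\frac{g(X,k)}{\mathbb E_X[g(X,k)]}\Big|\Big];$$ then $\varepsilon_{\hat g}\le\max_{k\in[K]}\frac{2\mathbb E_X[|\hat g(X,k)-g(X,k)|]}{\mathbb E_X[g(X,k)]}$. If $\hat\pi$ is a minimizer of the Primal LP$(r,\hat g,\mathbb P_X,\mathcal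 C,\alpha)$, then $$\mathbb E_X\Big[\sum_{y}r(X,y)\hat\pi(X,y)\Big]\le\mathrm{OPT}+2\|r\|_\infty\min\Big(1-\alpha,\frac{\varepsilon_{\hat g}}{\alpha+\varepsilon_{\hat g}}\Big)$$ (with the convention $0/0:=0$), and for all $c\in[C]$, $$\max_{k,k'\in\mathcal I_c}\Big|\mathbb E_X\Big[\Big(\frac{g(X,k)}{\mathbb E_X[g(X,k)]}-\frac{g(X,k')}{\mathbb E_X[g(X,k')]}\Big)\hat\pi(X,y_c)\Big]\Big|\le\min(1,\alpha+\varepsilon_{\hat g}).$$
   Context: Primal LP$(r,g,P,\mathcal C,\alpha)$ for a distribution $P$ on $\mathcal X$, $r:\mathcal X\times\mathcal Y\to[0,\infty)$, $g:\mathcal X\times[K]\to[0,1]$, constraints $\mathcal C=\{(y_c,\mathcal I_c)\}_{c\in[C]}$ ($y_c\in\mathcal Y$, $\mathcal I_c\subseteq[K]$) and $\alpha\in[0,1]$: minimize over $\pi:\mathcal X\times\mathcal Y\to[0,\infty)$ and $q\in\mathbb R^C$ the objective $\mathbb E_{X\sim P}[\sum_{y\in\mathcal Y}r(X,y)\pi(X,y)]$ subject to $\sum_{y}\pi(x,y)=1$ for all $x\in\mathcal X$ and $\big|\mathbb E_{X\sim P}\big[\frac{g(X,k)}{\mathbb E_{X\sim P}[g(X,k)]}\pi(X,y_c)\big]-q_c\big|\le\alpha/2$ for all $c\in[C]$, $k\in\mathcal I_c$. A feasible $\pi$ represents a randomized classifier with $\pi(x,y)=\Pr(h(X)=y\mid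 X=x)$. When $g(x,k)=\Pr(Z_k=1\mid X=x)$ and $P$ is the law of $X$, the normalizer equals $\Pr(Z_k=1)$ and the constraints are $\alpha$-group fairness. *)

theory Defs
  imports "HOL-Probability.Probability"
begin

text \<open>The distribution P is a measure M on the
  space of features; the label set is a finite type 'y; groups are indexed by
  k < K; constraints by c < C with label yc c and group set Ic c.\<close>

definition lp_objective ::
  "'x measure \<Rightarrow> ('x \<Rightarrow> 'y::finite \<Rightarrow> real) \<Rightarrow> ('x \<Rightarrow> 'y \<Rightarrow> real) \<Rightarrow> real" where
  "lp_objective M r \<pi> = (\<integral>x. (\<Sum>y\<in>UNIV. r x y * \<pi> x y) \<partial>M)"

definition lp_feasible ::
  "'x measure \<Rightarrow> ('x \<Rightarrow> nat \<Rightarrow> real) \<Rightarrow> nat \<Rightarrow> (nat \<Rightarrow> 'y::finite) \<Rightarrow> (nat \<Rightarrow> nat set)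
     \<Rightarrow> real \<Rightarrow> ('x \<Rightarrow> 'y \<Rightarrow> real) \<Rightarrow> bool" where
  "lp_feasible M g C yc Ic \<alpha> \<pi> \<longleftrightarrow>
     (\<forall>y. (\<lambda>x. \<pi> x y) \<in> borel_measurable M) \<and>
     (\<forall>x\<in>space M. \<forall>y. 0 \<le> \<pi> x y) \<and>
     (\<forall>x\<in>space M. (\<Sum>y\<in>UNIV. \<pi> x y) = 1) \<and>
     (\<exists>q::nat \<Rightarrow> real. \<forall>c<C. \<forall>k\<in>Ic c.
        \<bar>(\<integral>x. (g x k / (\<integral>x'. g x' k \<partial>M)) * \<pi> x (yc c) \<partial>M) - q c\<bar> \<le> \<alpha> / 2)"

definition lp_value ::
  "'x measure \<Rightarrow> ('x \<Rightarrow> 'y::finite \<Rightarrow> real) \<Rightarrow> ('x \<Rightarrow> nat \<Rightarrow> real) \<Rightarrow> nat \<Rightarrow> (nat \<Rightarrow> 'y)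
     \<Rightarrow> (nat \<Rightarrow> nat set) \<Rightarrow> real \<Rightarrow> real" where
  "lp_value M r g C yc Ic \<alpha> =
     Inf (lp_objective M r ` {\<pi>. lp_feasible M g C yc Ic \<alpha> \<pi>})"

definition lp_minimizer ::
  "'x measure \<Rightarrow> ('x \<Rightarrow> 'y::finite \<Rightarrow> real) \<Rightarrow> ('x \<Rightarrow> nat \<Rightarrow> real) \<Rightarrow> nat \<Rightarrow> (nat \<Rightarrow> 'y)
     \<Rightarrow> (nat \<Rightarrow> nat set) \<Rightarrow> real \<Rightarrow> ('x \<Rightarrow> 'y \<Rightarrow> real) \<Rightarrow> bool" where
  "lp_minimizer M r g C yc Ic \<alpha> \<pi> \<longleftrightarrow>
     lp_feasible M g C yc Ic \<alpha> \<pi> \<and>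
     (\<forall>\<pi>'. lp_feasible M g C yc Ic \<alpha> \<pi>' \<longrightarrow> lp_objective M r \<pi> \<le> lp_objective M r \<pi>')"

definition sup_norm :: "'x measure \<Rightarrow> ('x \<Rightarrow> 'y \<Rightarrow> real) \<Rightarrow> real" where
  "sup_norm M r = Sup {r x y | x y. x \<in> space M}"

definition eps_g ::
  "'x measure \<Rightarrow> nat \<Rightarrow> ('x \<Rightarrow> nat \<Rightarrow> real) \<Rightarrow> ('x \<Rightarrow> nat \<Rightarrow> real) \<Rightarrow> real" where
  "eps_g M K gh g = Max ((\<lambda>k. \<integral>x. \<bar>gh x k / (\<integral>x'. gh x' k \<partial>M) - g x k / (\<integral>x'. g x' k \<partial>M)\<bar> \<partial>M) ` {..<K})"

end

theory Submission
  imports Defs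
begin


context prob_space begin

lemma bdd_int:
  fixes f :: "'a \<Rightarrow> real"
  assumes "f \<in> borel_measurable M" "\<forall>x\<in>space M. \<bar>f x\<bar> \<le> B"
  shows "integrable M f"
  using assms by (intro integrable_const_bound[where B=B]) auto

lemma pi_le1:
  fixes \<pi> :: "'a \<Rightarrow> 'y::finite \<Rightarrow> real"
  assumes "\<forall>x\<in>space M. \<forall>y. 0 \<le> \<pi> x y" "\<forall>x\<in>space M. (\<Sum>y\<in>UNIV. \<pi> x y) = 1" "x \<in> space M"
  shows "\<pi> x y \<le> 1"
proof -
  have "\<pi> x y \<le> (\<Sum>y\<in>UNIV. \<pi> x y)"
    by (rule member_le_sum) (use assms in auto)
  thus ?thesis using assms by simp
qed

lemma w_facts:
  fixes G :: "'a \<Rightarrow> nat \<Rightarrow> real"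
  assumes Gm: "(\<lambda>x. G x k) \<in> borel_measurable M"
    and Gr: "\<forall>x\<in>space M. 0 \<le> G x k \<and> G x k \<le> 1"
    and Gp: "0 < (\<integral>x. G x k \<partial>M)"
  shows "integrable M (\<lambda>x. G x k)"
    and "integrable M (\<lambda>x. G x k / (\<integral>x'. G x' k \<partial>M))"
    and "(\<integral>x. G x k / (\<integral>x'. G x' k \<partial>M) \<partial>M) = 1"
proof -
  show i: "integrable M (\<lambda>x. G x k)"
    by (rule bdd_int[where B=1]) (use Gm Gr in auto)
  thus "integrable M (\<lambda>x. G x k / (\<integral>x'. G x' k \<partial>M))" by auto
  show "(\<integral>x. G x k / (\<integral>x'. G x' k \<partial>M) \<partial>M) = 1" using Gp by simp
qed

lemma wp_facts:
  fixes G :: "'a \<Rightarrow> nat \<Rightarrow> real"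
  assumes Gm: "(\<lambda>x. G x k) \<in> borel_measurable M"
    and Gr: "\<forall>x\<in>space M. 0 \<le> G x k \<and> G x k \<le> 1"
    and Gp: "0 < (\<integral>x. G x k \<partial>M)"
    and pm: "p \<in> borel_measurable M"
    and pr: "\<forall>x\<in>space M. 0 \<le> p x \<and> p x \<le> 1"
  shows "integrable M (\<lambda>x. G x k / (\<integral>x'. G x' k \<partial>M) * p x)"
    and "0 \<le> (\<integral>x. G x k / (\<integral>x'. G x' k \<partial>M) * p x \<partial>M)"
    and "(\<integral>x. G x k / (\<integral>x'. G x' k \<partial>M) * p x \<partial>M) \<le> 1"
proof -
  let ?I = "\<integral>x'. G x' k \<partial>M"
  have b: "\<forall>x\<in>space M. \<bar>G x k / ?I * p x\<bar> \<le> 1 / ?I"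
  proof
    fix x assume x: "x \<in> space M"
    have "\<bar>G x k / ?I * p x\<bar> = G x k / ?I * p x" using Gr pr x Gp by simp
    also have "\<dots> \<le> 1 / ?I * 1"
      using Gr pr x Gp by (intro mult_mono divide_right_mono) auto
    finally show "\<bar>G x k / ?I * p x\<bar> \<le> 1 / ?I" by simp
  qed
  show i: "integrable M (\<lambda>x. G x k / ?I * p x)"
    by (rule bdd_int[where B="1/?I"]) (use Gm pm b in auto)
  show "0 \<le> (\<integral>x. G x k / ?I * p x \<partial>M)"
    by (rule integral_nonneg_AE) (use Gr pr Gp in auto)
  have "(\<integral>x. G x k / ?I * p x \<partial>M) \<le> (\<integral>x. G x k / ?I \<partial>M)"
    apply (rule integral_mono[OF i w_facts(2)[of G k, OF Gm Gr Gp]])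
    using Gr pr Gp by (auto intro!: divide_right_mono mult_left_le)
  thus "(\<integral>x. G x k / ?I * p x \<partial>M) \<le> 1" using w_facts(3)[of G k, OF Gm Gr Gp] by simp
qed

lemma mean_zero:
  fixes f p :: "'a \<Rightarrow> real"
  assumes fi: "integrable M f" and f0: "integral\<^sup>L M f = 0"
    and pm: "p \<in> borel_measurable M"
    and pr: "\<forall>x\<in>space M. 0 \<le> p x \<and> p x \<le> 1"
  shows "\<bar>\<integral>x. f x * p x \<partial>M\<bar> \<le> (\<integral>x. \<bar>f x\<bar> \<partial>M) / 2"
proof -
  have fpi: "integrable M (\<lambda>x. f x * p x)"
    by (rule Bochner_Integration.integrable_bound[OF integrable_abs[OF fi]])
       (use pm fi pr in \<open>auto simp: abs_mult intro!: mult_left_le\<close>)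
  have ai: "integrable M (\<lambda>x. (\<bar>f x\<bar> + f x) / 2)" using fi by auto
  have bi: "integrable M (\<lambda>x. (f x - \<bar>f x\<bar>) / 2)" using fi by auto
  have "(\<integral>x. f x * p x \<partial>M) \<le> (\<integral>x. (\<bar>f x\<bar> + f x) / 2 \<partial>M)"
  proof (rule integral_mono[OF fpi ai])
    fix x assume x: "x \<in> space M"
    show "f x * p x \<le> (\<bar>f x\<bar> + f x) / 2"
    proof (cases "f x \<ge> 0")
      case True thus ?thesis using pr x by (simp add: mult_left_le)
    next
      case False thus ?thesis using pr x by (simp add: mult_nonneg_nonpos2 mult_le_0_iff)
    qed
  qed
  moreover have "(\<integral>x. (\<bar>f x\<bar> + f x) / 2 \<partial>M) = (\<integral>x. \<bar>f x\<bar> \<partial>M) / 2"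
    using fi f0 by (simp add: Bochner_Integration.integral_add)
  moreover have "(\<integral>x. (f x - \<bar>f x\<bar>) / 2 \<partial>M) \<le> (\<integral>x. f x * p x \<partial>M)"
  proof (rule integral_mono[OF bi fpi])
    fix x assume x: "x \<in> space M"
    show "(f x - \<bar>f x\<bar>) / 2 \<le> f x * p x"
    proof (cases "f x \<ge> 0")
      case True thus ?thesis using pr x by simp
    next
      case False
      have "f x * 1 \<le> f x * p x" using False pr x by (intro mult_left_mono_neg) auto
      thus ?thesis using False by simp
    qed
  qed
  moreover have "(\<integral>x. (f x - \<bar>f x\<bar>) / 2 \<partial>M) = - (\<integral>x. \<bar>f x\<bar> \<partial>M) / 2"
    using fi f0 by (simp add: Bochner_Integration.integral_diff)
  ultimately show ?thesis by linarith
qed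

end


context prob_space begin

lemma mix_feasible:
  fixes G :: "'a \<Rightarrow> nat \<Rightarrow> real" and \<pi> :: "'a \<Rightarrow> 'y::finite \<Rightarrow> real"
  assumes Gm: "\<forall>k<K. (\<lambda>x. G x k) \<in> borel_measurable M"
    and Gr: "\<forall>x\<in>space M. \<forall>k<K. 0 \<le> G x k \<and> G x k \<le> 1"
    and Gp: "\<forall>k<K. 0 < (\<integral>x. G x k \<partial>M)"
    and Ic_sub: "\<forall>c<C. Ic c \<subseteq> {..<K}"
    and pm: "\<forall>y. (\<lambda>x. \<pi> x y) \<in> borel_measurable M"
    and pn: "\<forall>x\<in>space M. \<forall>y. 0 \<le> \<pi> x y"
    and ps: "\<forall>x\<in>space M. (\<Sum>y\<in>UNIV. \<pi> x y) = 1"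
    and q: "\<forall>c<C. \<forall>k\<in>Ic c. \<bar>(\<integral>x. G x k / (\<integral>x'. G x' k \<partial>M) * \<pi> x (yc c) \<partial>M) - q c\<bar> \<le> \<beta> / 2"
    and t: "0 \<le> t" "t \<le> 1" "t * \<beta> \<le> \<alpha>"
  shows "lp_feasible M G C yc Ic \<alpha> (\<lambda>x y. t * \<pi> x y + (1 - t) * (if y = y0 then 1 else 0))"
  unfolding lp_feasible_def
proof (intro conjI)
  show "\<forall>y. (\<lambda>x. t * \<pi> x y + (1 - t) * (if y = y0 then 1 else 0)) \<in> borel_measurable M"
    by (intro allI borel_measurable_add borel_measurable_times borel_measurable_const pm[rule_format])
  show "\<forall>x\<in>space M. \<forall>y. 0 \<le> t * \<pi> x y + (1 - t) * (if y = y0 then 1 else 0)"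
    using pn t by auto
  show "\<forall>x\<in>space M. (\<Sum>y\<in>UNIV. t * \<pi> x y + (1 - t) * (if y = y0 then 1 else 0)) = 1"
    using ps by (simp add: sum.distrib sum_distrib_left[symmetric])
  show "\<exists>q. \<forall>c<C. \<forall>k\<in>Ic c. \<bar>(\<integral>x. G x k / (\<integral>x'. G x' k \<partial>M) * (t * \<pi> x (yc c) + (1 - t) * (if yc c = y0 then 1 else 0)) \<partial>M) - q c\<bar> \<le> \<alpha> / 2"
  proof (intro exI[of _ "\<lambda>c. t * q c + (1 - t) * (if yc c = y0 then 1 else 0)"] allI impI ballI)
    fix c k assume c: "c < C" and k: "k \<in> Ic c"
    have kK: "k < K" using Ic_sub c k by auto
    let ?I = "\<integral>x'. G x' k \<partial>M"
    let ?e = "(1 - t) * (if yc c = y0 then 1 else 0) :: real"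
    have pr: "\<forall>x\<in>space M. 0 \<le> \<pi> x (yc c) \<and> \<pi> x (yc c) \<le> 1"
      using pn ps pi_le1[OF pn ps] by auto
    have i1: "integrable M (\<lambda>x. G x k / ?I * \<pi> x (yc c))"
      by (rule wp_facts(1)[of G k]) (use Gm Gr Gp kK pm pr in auto)
    have i2: "integrable M (\<lambda>x. G x k / ?I)"
      by (rule w_facts(2)[of G k]) (use Gm Gr Gp kK in auto)
    have w1: "(\<integral>x. G x k / ?I \<partial>M) = 1"
      by (rule w_facts(3)[of G k]) (use Gm Gr Gp kK in auto)
    define f1 where "f1 = (\<lambda>x. G x k / ?I * \<pi> x (yc c))"
    define f2 where "f2 = (\<lambda>x. G x k / ?I)"
    have j1: "integrable M f1" using i1 unfolding f1_def .
    have j2: "integrable M f2" using i2 unfolding f2_def .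
    have "(\<integral>x. G x k / ?I * (t * \<pi> x (yc c) + ?e) \<partial>M)
        = (\<integral>x. t * f1 x + ?e * f2 x \<partial>M)"
      unfolding f1_def f2_def by (rule Bochner_Integration.integral_cong) (auto simp: algebra_simps)
    also have "\<dots> = t * integral\<^sup>L M f1 + ?e * integral\<^sup>L M f2"
      using j1 j2 by simp
    finally have eq: "(\<integral>x. G x k / ?I * (t * \<pi> x (yc c) + ?e) \<partial>M)
        = t * (\<integral>x. G x k / ?I * \<pi> x (yc c) \<partial>M) + ?e" using w1 unfolding f1_def f2_def by simp
    have "\<bar>(\<integral>x. G x k / ?I * \<pi> x (yc c) \<partial>M) - q c\<bar> \<le> \<beta> / 2" using q c k by auto
    hence "t * \<bar>(\<integral>x. G x k / ?I * \<pi> x (yc c) \<partial>M) - q c\<bar> \<le> t * (\<beta> / 2)"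
      using t by (intro mult_left_mono) auto
    hence "\<bar>t * ((\<integral>x. G x k / ?I * \<pi> x (yc c) \<partial>M) - q c)\<bar> \<le> \<alpha> / 2"
      using t by (simp add: abs_mult)
    thus "\<bar>(\<integral>x. G x k / ?I * (t * \<pi> x (yc c) + ?e) \<partial>M) - (t * q c + ?e)\<bar> \<le> \<alpha> / 2"
      unfolding eq by (simp add: algebra_simps)
  qed
qed

lemma obj_int:
  fixes r \<pi> :: "'a \<Rightarrow> 'y::finite \<Rightarrow> real"
  assumes rm: "\<forall>y. (\<lambda>x. r x y) \<in> borel_measurable M"
    and rn: "\<forall>x\<in>space M. \<forall>y. 0 \<le> r x y"
    and rB: "\<forall>x\<in>space M. \<forall>y. r x y \<le> B"
    and pm: "\<forall>y. (\<lambda>x. \<pi> x y) \<in> borel_measurable M"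
    and pr: "\<forall>x\<in>space M. \<forall>y. 0 \<le> \<pi> x y \<and> \<pi> x y \<le> 1"
  shows "integrable M (\<lambda>x. \<Sum>y\<in>UNIV. r x y * \<pi> x y)"
proof (rule bdd_int[where B="of_nat CARD('y) * B"])
  show "(\<lambda>x. \<Sum>y\<in>UNIV. r x y * \<pi> x y) \<in> borel_measurable M"
    using rm pm by (intro borel_measurable_sum borel_measurable_times) auto
  show "\<forall>x\<in>space M. \<bar>\<Sum>y\<in>UNIV. r x y * \<pi> x y\<bar> \<le> of_nat CARD('y) * B"
  proof
    fix x assume x: "x \<in> space M"
    have "\<bar>\<Sum>y\<in>UNIV. r x y * \<pi> x y\<bar> = (\<Sum>y\<in>UNIV. r x y * \<pi> x y)"
      using rn pr x by (intro abs_of_nonneg sum_nonneg) auto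
    also have "\<dots> \<le> (\<Sum>y\<in>(UNIV::'y set). B)"
    proof (rule sum_mono)
      fix y
      have "r x y * \<pi> x y \<le> r x y * 1" using rn pr x by (intro mult_left_mono) auto
      moreover have "r x y \<le> B" using rB x by auto
      ultimately show "r x y * \<pi> x y \<le> B" by linarith
    qed
    finally show "\<bar>\<Sum>y\<in>UNIV. r x y * \<pi> x y\<bar> \<le> of_nat CARD('y) * B" by simp
  qed
qed

lemma mix_bound:
  fixes G :: "'a \<Rightarrow> nat \<Rightarrow> real" and \<pi> \<pi>h r :: "'a \<Rightarrow> 'y::finite \<Rightarrow> real"
  assumes rm: "\<forall>y. (\<lambda>x. r x y) \<in> borel_measurable M"
    and rn: "\<forall>x\<in>space M. \<forall>y. 0 \<le> r x y"
    and rB: "\<forall>x\<in>space M. \<forall>y. r x y \<le> B"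
    and Gm: "\<forall>k<K. (\<lambda>x. G x k) \<in> borel_measurable M"
    and Gr: "\<forall>x\<in>space M. \<forall>k<K. 0 \<le> G x k \<and> G x k \<le> 1"
    and Gp: "\<forall>k<K. 0 < (\<integral>x. G x k \<partial>M)"
    and Ic_sub: "\<forall>c<C. Ic c \<subseteq> {..<K}"
    and mini: "lp_minimizer M r G C yc Ic \<alpha> \<pi>h"
    and pm: "\<forall>y. (\<lambda>x. \<pi> x y) \<in> borel_measurable M"
    and pn: "\<forall>x\<in>space M. \<forall>y. 0 \<le> \<pi> x y"
    and ps: "\<forall>x\<in>space M. (\<Sum>y\<in>UNIV. \<pi> x y) = 1"
    and q: "\<forall>c<C. \<forall>k\<in>Ic c. \<bar>(\<integral>x. G x k / (\<integral>x'. G x' k \<partial>M) * \<pi> x (yc c) \<partial>M) - q c\<bar> \<le> \<beta> / 2"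
    and t: "0 \<le> t" "t \<le> 1" "t * \<beta> \<le> \<alpha>"
  shows "lp_objective M r \<pi>h \<le> lp_objective M r \<pi> + (1 - t) * sup_norm M r"
proof -
  obtain y0 :: 'y where True by simp
  let ?e = "\<lambda>y::'y. if y = y0 then 1 else (0::real)"
  let ?p = "\<lambda>x y. t * \<pi> x y + (1 - t) * ?e y"
  have feas: "lp_feasible M G C yc Ic \<alpha> ?p"
    by (rule mix_feasible[OF Gm Gr Gp Ic_sub pm pn ps q t])
  hence le1: "lp_objective M r \<pi>h \<le> lp_objective M r ?p"
    using mini unfolding lp_minimizer_def by blast
  have pr: "\<forall>x\<in>space M. \<forall>y. 0 \<le> \<pi> x y \<and> \<pi> x y \<le> 1"
    using pn pi_le1[OF pn ps] by auto
  have i1: "integrable M (\<lambda>x. \<Sum>y\<in>UNIV. r x y * \<pi> x y)"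
    by (rule obj_int[OF rm rn rB pm pr])
  have i2: "integrable M (\<lambda>x. r x y0)"
    by (rule bdd_int[where B=B]) (use rm rn rB in auto)
  have "lp_objective M r ?p = (\<integral>x. t * (\<Sum>y\<in>UNIV. r x y * \<pi> x y) + (1 - t) * r x y0 \<partial>M)"
    unfolding lp_objective_def
  proof (rule Bochner_Integration.integral_cong[OF refl])
    fix x
    have "(\<Sum>y\<in>UNIV. r x y * ?p x y) = (\<Sum>y\<in>UNIV. t * (r x y * \<pi> x y)) + (\<Sum>y\<in>UNIV. (1 - t) * r x y * ?e y)"
      by (simp add: sum.distrib[symmetric] algebra_simps)
    also have "(\<Sum>y\<in>UNIV. (1 - t) * r x y * ?e y) = (1 - t) * r x y0"
      by (simp add: if_distrib[of "\<lambda>z. (1 - t) * r x _ * z"] cong: if_cong)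
    finally show "(\<Sum>y\<in>UNIV. r x y * ?p x y) = t * (\<Sum>y\<in>UNIV. r x y * \<pi> x y) + (1 - t) * r x y0"
      by (simp add: sum_distrib_left)
  qed
  also have "\<dots> = t * lp_objective M r \<pi> + (1 - t) * (\<integral>x. r x y0 \<partial>M)"
    using i1 i2 unfolding lp_objective_def by (simp add: Bochner_Integration.integral_add)
  finally have eq: "lp_objective M r ?p = t * lp_objective M r \<pi> + (1 - t) * (\<integral>x. r x y0 \<partial>M)" .
  have S: "(\<integral>x. r x y0 \<partial>M) \<le> sup_norm M r"
  proof (rule integral_le_const[OF i2], rule AE_I2)
    fix x assume x: "x \<in> space M"
    have "bdd_above {r x y | x y. x \<in> space M}"
      using rB by (auto intro!: bdd_aboveI[where M=B])
    thus "r x y0 \<le> sup_norm M r" unfolding sup_norm_def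
      by (rule cSup_upper[rotated]) (use x in auto)
  qed
  have A: "0 \<le> lp_objective M r \<pi>" unfolding lp_objective_def
    by (rule integral_nonneg_AE) (use rn pn in \<open>auto intro!: sum_nonneg\<close>)
  have "t * lp_objective M r \<pi> \<le> lp_objective M r \<pi>" using A t by (simp add: mult_left_le_one_le)
  moreover have "(1 - t) * (\<integral>x. r x y0 \<partial>M) \<le> (1 - t) * sup_norm M r"
    using S t by (intro mult_left_mono) auto
  ultimately show ?thesis using le1 eq by linarith
qed

end


context prob_space begin

lemma half_bound:
  fixes G :: "'a \<Rightarrow> nat \<Rightarrow> real" and \<pi> :: "'a \<Rightarrow> 'y::finite \<Rightarrow> real"
  assumes Gm: "\<forall>k<K. (\<lambda>x. G x k) \<in> borel_measurable M"
    and Gr: "\<forall>x\<in>space M. \<forall>k<K. 0 \<le> G x k \<and> G x k \<le> 1"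
    and Gp: "\<forall>k<K. 0 < (\<integral>x. G x k \<partial>M)"
    and Ic_sub: "\<forall>c<C. Ic c \<subseteq> {..<K}"
    and pm: "\<forall>y. (\<lambda>x. \<pi> x y) \<in> borel_measurable M"
    and pr: "\<forall>x\<in>space M. \<forall>y. 0 \<le> \<pi> x y \<and> \<pi> x y \<le> 1"
  shows "\<forall>c<C. \<forall>k\<in>Ic c. \<bar>(\<integral>x. G x k / (\<integral>x'. G x' k \<partial>M) * \<pi> x (yc c) \<partial>M) - (\<lambda>c. 1/2) c\<bar> \<le> 1 / 2"
proof (intro allI impI ballI)
  fix c k assume c: "c < C" and k: "k \<in> Ic c"
  have kK: "k < K" using Ic_sub c k by auto
  have L: "\<And>v::real. 0 \<le> v \<Longrightarrow> v \<le> 1 \<Longrightarrow> \<bar>v - (\<lambda>c. 1/2) c\<bar> \<le> 1/2" by (simp only: abs_le_iff) linarith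
  have "0 \<le> (\<integral>x. G x k / (\<integral>x'. G x' k \<partial>M) * \<pi> x (yc c) \<partial>M)"
    by (rule wp_facts(2)[of G k]) (use Gm Gr Gp kK pm pr in auto)
  moreover have "(\<integral>x. G x k / (\<integral>x'. G x' k \<partial>M) * \<pi> x (yc c) \<partial>M) \<le> 1"
    by (rule wp_facts(3)[of G k]) (use Gm Gr Gp kK pm pr in auto)
  ultimately show "\<bar>(\<integral>x. G x k / (\<integral>x'. G x' k \<partial>M) * \<pi> x (yc c) \<partial>M) - (\<lambda>c. 1/2) c\<bar> \<le> 1 / 2"
    by (rule L)
qed

lemma shift:
  fixes G H :: "'a \<Rightarrow> nat \<Rightarrow> real"
  assumes Gm: "(\<lambda>x. G x k) \<in> borel_measurable M"
    and Gr: "\<forall>x\<in>space M. 0 \<le> G x k \<and> G x k \<le> 1"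
    and Gp: "0 < (\<integral>x. G x k \<partial>M)"
    and Hm: "(\<lambda>x. H x k) \<in> borel_measurable M"
    and Hr: "\<forall>x\<in>space M. 0 \<le> H x k \<and> H x k \<le> 1"
    and Hp: "0 < (\<integral>x. H x k \<partial>M)"
    and pm: "p \<in> borel_measurable M"
    and pr: "\<forall>x\<in>space M. 0 \<le> p x \<and> p x \<le> 1"
  shows "\<bar>(\<integral>x. H x k / (\<integral>x'. H x' k \<partial>M) * p x \<partial>M) - (\<integral>x. G x k / (\<integral>x'. G x' k \<partial>M) * p x \<partial>M)\<bar>
     \<le> (\<integral>x. \<bar>H x k / (\<integral>x'. H x' k \<partial>M) - G x k / (\<integral>x'. G x' k \<partial>M)\<bar> \<partial>M) / 2"
proof -
  define f1 where "f1 = (\<lambda>x. H x k / (\<integral>x'. H x' k \<partial>M))"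
  define f2 where "f2 = (\<lambda>x. G x k / (\<integral>x'. G x' k \<partial>M))"
  have i1: "integrable M f1" unfolding f1_def by (rule w_facts(2)[of H k, OF Hm Hr Hp])
  have i2: "integrable M f2" unfolding f2_def by (rule w_facts(2)[of G k, OF Gm Gr Gp])
  have e1: "integral\<^sup>L M f1 = 1" unfolding f1_def by (rule w_facts(3)[of H k, OF Hm Hr Hp])
  have e2: "integral\<^sup>L M f2 = 1" unfolding f2_def by (rule w_facts(3)[of G k, OF Gm Gr Gp])
  have p1: "integrable M (\<lambda>x. f1 x * p x)" unfolding f1_def by (rule wp_facts(1)[of H k, OF Hm Hr Hp pm pr])
  have p2: "integrable M (\<lambda>x. f2 x * p x)" unfolding f2_def by (rule wp_facts(1)[of G k, OF Gm Gr Gp pm pr])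
  have "\<bar>\<integral>x. (\<lambda>x. f1 x - f2 x) x * p x \<partial>M\<bar> \<le> (\<integral>x. \<bar>(\<lambda>x. f1 x - f2 x) x\<bar> \<partial>M) / 2"
    by (rule mean_zero[OF _ _ pm pr]) (use i1 i2 e1 e2 in auto)
  moreover have "(\<integral>x. (f1 x - f2 x) * p x \<partial>M) = (\<integral>x. f1 x * p x \<partial>M) - (\<integral>x. f2 x * p x \<partial>M)"
    using p1 p2 by (simp add: left_diff_distrib)
  ultimately show ?thesis unfolding f1_def f2_def by simp
qed

lemma ratio_bound:
  fixes G H :: "'a \<Rightarrow> nat \<Rightarrow> real"
  assumes Gm: "(\<lambda>x. G x k) \<in> borel_measurable M"
    and Gr: "\<forall>x\<in>space M. 0 \<le> G x k \<and> G x k \<le> 1"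
    and Gp: "0 < (\<integral>x. G x k \<partial>M)"
    and Hm: "(\<lambda>x. H x k) \<in> borel_measurable M"
    and Hr: "\<forall>x\<in>space M. 0 \<le> H x k \<and> H x k \<le> 1"
    and Hp: "0 < (\<integral>x. H x k \<partial>M)"
  shows "(\<integral>x. \<bar>H x k / (\<integral>x'. H x' k \<partial>M) - G x k / (\<integral>x'. G x' k \<partial>M)\<bar> \<partial>M)
     \<le> 2 * (\<integral>x. \<bar>H x k - G x k\<bar> \<partial>M) / (\<integral>x. G x k \<partial>M)"
proof -
  define a where "a = (\<integral>x'. H x' k \<partial>M)"
  define b where "b = (\<integral>x'. G x' k \<partial>M)"
  define h where "h = (\<lambda>x. H x k)"
  define g where "g = (\<lambda>x. G x k)"
  have a: "0 < a" using Hp a_def by simp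
  have b: "0 < b" using Gp b_def by simp
  have ih: "integrable M h" unfolding h_def by (rule w_facts(1)[of H k, OF Hm Hr Hp])
  have ig: "integrable M g" unfolding g_def by (rule w_facts(1)[of G k, OF Gm Gr Gp])
  have ia: "integrable M (\<lambda>x. h x * \<bar>1/a - 1/b\<bar> + \<bar>h x - g x\<bar> / b)" using ih ig by auto
  have il: "integrable M (\<lambda>x. \<bar>h x / a - g x / b\<bar>)" using ih ig by auto
  have "(\<integral>x. \<bar>h x / a - g x / b\<bar> \<partial>M) \<le> (\<integral>x. h x * \<bar>1/a - 1/b\<bar> + \<bar>h x - g x\<bar> / b \<partial>M)"
  proof (rule integral_mono[OF il ia])
    fix x assume x: "x \<in> space M"
    have "h x / a - g x / b = h x * (1/a - 1/b) + (h x - g x) / b"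
      by (simp add: right_diff_distrib diff_divide_distrib)
    also have "\<bar>\<dots>\<bar> \<le> \<bar>h x * (1/a - 1/b)\<bar> + \<bar>(h x - g x) / b\<bar>" by (rule abs_triangle_ineq)
    also have "\<dots> = h x * \<bar>1/a - 1/b\<bar> + \<bar>h x - g x\<bar> / b"
      using Hr x b unfolding h_def by (simp add: abs_mult)
    finally show "\<bar>h x / a - g x / b\<bar> \<le> h x * \<bar>1/a - 1/b\<bar> + \<bar>h x - g x\<bar> / b" .
  qed
  also have "\<dots> = a * \<bar>1/a - 1/b\<bar> + (\<integral>x. \<bar>h x - g x\<bar> \<partial>M) / b"
    using ih ig unfolding a_def h_def by simp
  finally have L1: "(\<integral>x. \<bar>h x / a - g x / b\<bar> \<partial>M) \<le> a * \<bar>1/a - 1/b\<bar> + (\<integral>x. \<bar>h x - g x\<bar> \<partial>M) / b" .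
  have "a * \<bar>1/a - 1/b\<bar> = \<bar>a * (1/a - 1/b)\<bar>" using a by (simp add: abs_mult)
  also have "a * (1/a - 1/b) = (b - a) / b" using a b by (simp add: field_simps)
  also have "\<bar>(b - a) / b\<bar> = \<bar>b - a\<bar> / b" using b by simp
  finally have L2: "a * \<bar>1/a - 1/b\<bar> = \<bar>b - a\<bar> / b" .
  have "\<bar>b - a\<bar> = \<bar>\<integral>x. g x - h x \<partial>M\<bar>"
    using ih ig unfolding a_def b_def g_def h_def by simp
  also have "\<dots> \<le> (\<integral>x. \<bar>g x - h x\<bar> \<partial>M)" by (rule integral_abs_bound)
  also have "(\<integral>x. \<bar>g x - h x\<bar> \<partial>M) = (\<integral>x. \<bar>h x - g x\<bar> \<partial>M)" by (simp add: abs_minus_commute)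
  finally have L3: "\<bar>b - a\<bar> / b \<le> (\<integral>x. \<bar>h x - g x\<bar> \<partial>M) / b"
    using b by (intro divide_right_mono) auto
  have L4: "2 * (\<integral>x. \<bar>h x - g x\<bar> \<partial>M) / b = (\<integral>x. \<bar>h x - g x\<bar> \<partial>M) / b + (\<integral>x. \<bar>h x - g x\<bar> \<partial>M) / b"
    by simp
  have "(\<integral>x. \<bar>h x / a - g x / b\<bar> \<partial>M) \<le> 2 * (\<integral>x. \<bar>h x - g x\<bar> \<partial>M) / b"
    using L1 L2 L3 L4 by linarith
  thus ?thesis unfolding a_def b_def h_def g_def .
qed

end


context prob_space begin

lemma dev_int:
  fixes r rh p :: "'a \<Rightarrow> 'y::finite \<Rightarrow> real"
  assumes rm: "\<forall>y. (\<lambda>x. r x y) \<in> borel_measurable M"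
    and rhm: "\<forall>y. (\<lambda>x. rh x y) \<in> borel_measurable M"
    and rhi: "integrable M (\<lambda>x. \<Sum>y\<in>UNIV. \<bar>rh x y - r x y\<bar>)"
    and pm: "\<forall>y. (\<lambda>x. p x y) \<in> borel_measurable M"
    and pr: "\<forall>x\<in>space M. \<forall>y. 0 \<le> p x y \<and> p x y \<le> 1"
  shows "integrable M (\<lambda>x. \<Sum>y\<in>UNIV. (rh x y - r x y) * p x y)"
proof (rule Bochner_Integration.integrable_bound[OF rhi])
  show "(\<lambda>x. \<Sum>y\<in>UNIV. (rh x y - r x y) * p x y) \<in> borel_measurable M"
    using rm rhm pm by (intro borel_measurable_sum borel_measurable_times borel_measurable_diff) auto
  show "AE x in M. norm (\<Sum>y\<in>UNIV. (rh x y - r x y) * p x y) \<le> norm (\<Sum>y\<in>UNIV. \<bar>rh x y - r x y\<bar>)"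
  proof (rule AE_I2)
    fix x assume x: "x \<in> space M"
    have "\<bar>\<Sum>y\<in>UNIV. (rh x y - r x y) * p x y\<bar> \<le> (\<Sum>y\<in>UNIV. \<bar>(rh x y - r x y) * p x y\<bar>)"
      by (rule sum_abs)
    also have "\<dots> \<le> (\<Sum>y\<in>UNIV. \<bar>rh x y - r x y\<bar>)"
    proof (rule sum_mono)
      fix y
      have "\<bar>rh x y - r x y\<bar> * \<bar>p x y\<bar> \<le> \<bar>rh x y - r x y\<bar> * 1"
        using pr x by (intro mult_left_mono) auto
      thus "\<bar>(rh x y - r x y) * p x y\<bar> \<le> \<bar>rh x y - r x y\<bar>" by (simp add: abs_mult)
    qed
    finally show "norm (\<Sum>y\<in>UNIV. (rh x y - r x y) * p x y) \<le> norm (\<Sum>y\<in>UNIV. \<bar>rh x y - r x y\<bar>)"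
      by (simp add: sum_nonneg)
  qed
qed

lemma part1:
  fixes G :: "'a \<Rightarrow> nat \<Rightarrow> real" and \<pi> \<pi>h r rh :: "'a \<Rightarrow> 'y::finite \<Rightarrow> real"
  assumes rm: "\<forall>y. (\<lambda>x. r x y) \<in> borel_measurable M"
    and rn: "\<forall>x\<in>space M. \<forall>y. 0 \<le> r x y"
    and rB: "\<forall>x\<in>space M. \<forall>y. r x y \<le> B"
    and rhm: "\<forall>y. (\<lambda>x. rh x y) \<in> borel_measurable M"
    and rhi: "integrable M (\<lambda>x. \<Sum>y\<in>UNIV. \<bar>rh x y - r x y\<bar>)"
    and mini: "lp_minimizer M rh G C yc Ic \<alpha> \<pi>h"
    and feas: "lp_feasible M G C yc Ic \<alpha> \<pi>"
  shows "lp_objective M r \<pi>h \<le> lp_objective M r \<pi> + (\<integral>x. (\<Sum>y\<in>UNIV. \<bar>rh x y - r x y\<bar>) \<partial>M)"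
proof -
  have fh: "lp_feasible M G C yc Ic \<alpha> \<pi>h" using mini unfolding lp_minimizer_def by blast
  have le: "lp_objective M rh \<pi>h \<le> lp_objective M rh \<pi>" using mini feas unfolding lp_minimizer_def by blast
  have phm: "\<forall>y. (\<lambda>x. \<pi>h x y) \<in> borel_measurable M" and phn: "\<forall>x\<in>space M. \<forall>y. 0 \<le> \<pi>h x y"
    and phs: "\<forall>x\<in>space M. (\<Sum>y\<in>UNIV. \<pi>h x y) = 1" using fh unfolding lp_feasible_def by auto
  have pm: "\<forall>y. (\<lambda>x. \<pi> x y) \<in> borel_measurable M" and pn: "\<forall>x\<in>space M. \<forall>y. 0 \<le> \<pi> x y"
    and ps: "\<forall>x\<in>space M. (\<Sum>y\<in>UNIV. \<pi> x y) = 1" using feas unfolding lp_feasible_def by auto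
  have phr: "\<forall>x\<in>space M. \<forall>y. 0 \<le> \<pi>h x y \<and> \<pi>h x y \<le> 1" using phn pi_le1[OF phn phs] by auto
  have pr: "\<forall>x\<in>space M. \<forall>y. 0 \<le> \<pi> x y \<and> \<pi> x y \<le> 1" using pn pi_le1[OF pn ps] by auto
  define A where "A = (\<lambda>x. \<Sum>y\<in>UNIV. r x y * \<pi>h x y)"
  define Bf where "Bf = (\<lambda>x. \<Sum>y\<in>UNIV. r x y * \<pi> x y)"
  define Dh where "Dh = (\<lambda>x. \<Sum>y\<in>UNIV. (rh x y - r x y) * \<pi>h x y)"
  define D where "D = (\<lambda>x. \<Sum>y\<in>UNIV. (rh x y - r x y) * \<pi> x y)"
  define E where "E = (\<lambda>x. \<Sum>y\<in>UNIV. \<bar>rh x y - r x y\<bar>)"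
  have iA: "integrable M A" unfolding A_def by (rule obj_int[OF rm rn rB phm phr])
  have iB: "integrable M Bf" unfolding Bf_def by (rule obj_int[OF rm rn rB pm pr])
  have iDh: "integrable M Dh" unfolding Dh_def by (rule dev_int[OF rm rhm rhi phm phr])
  have iD: "integrable M D" unfolding D_def by (rule dev_int[OF rm rhm rhi pm pr])
  have iE: "integrable M E" unfolding E_def by (rule rhi)
  have o1: "lp_objective M rh \<pi>h = integral\<^sup>L M A + integral\<^sup>L M Dh"
  proof -
    have "lp_objective M rh \<pi>h = (\<integral>x. A x + Dh x \<partial>M)" unfolding lp_objective_def A_def Dh_def
      by (rule Bochner_Integration.integral_cong) (auto simp: sum.distrib[symmetric] algebra_simps)
    thus ?thesis using iA iDh by simp
  qed
  have o2: "lp_objective M rh \<pi> = integral\<^sup>L M Bf + integral\<^sup>L M D"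
  proof -
    have "lp_objective M rh \<pi> = (\<integral>x. Bf x + D x \<partial>M)" unfolding lp_objective_def Bf_def D_def
      by (rule Bochner_Integration.integral_cong) (auto simp: sum.distrib[symmetric] algebra_simps)
    thus ?thesis using iB iD by simp
  qed
  have "(\<integral>x. D x - Dh x \<partial>M) \<le> integral\<^sup>L M E"
  proof (rule integral_mono)
    show "integrable M (\<lambda>x. D x - Dh x)" using iD iDh by auto
    show "integrable M E" by (rule iE)
    fix x assume x: "x \<in> space M"
    have "D x - Dh x = (\<Sum>y\<in>UNIV. (rh x y - r x y) * (\<pi> x y - \<pi>h x y))"
      unfolding D_def Dh_def by (simp add: sum_subtractf[symmetric] algebra_simps)
    also have "\<dots> \<le> (\<Sum>y\<in>UNIV. \<bar>rh x y - r x y\<bar>)"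
    proof (rule sum_mono)
      fix y
      have "0 \<le> \<pi> x y" "\<pi> x y \<le> 1" "0 \<le> \<pi>h x y" "\<pi>h x y \<le> 1" using pr phr x by auto
      hence "\<bar>\<pi> x y - \<pi>h x y\<bar> \<le> 1" by (simp only: abs_le_iff) linarith
      hence "\<bar>rh x y - r x y\<bar> * \<bar>\<pi> x y - \<pi>h x y\<bar> \<le> \<bar>rh x y - r x y\<bar> * 1"
        by (intro mult_left_mono) auto
      hence "\<bar>(rh x y - r x y) * (\<pi> x y - \<pi>h x y)\<bar> \<le> \<bar>rh x y - r x y\<bar>" by (simp add: abs_mult)
      thus "(rh x y - r x y) * (\<pi> x y - \<pi>h x y) \<le> \<bar>rh x y - r x y\<bar>" by linarith
    qed
    finally show "D x - Dh x \<le> E x" unfolding E_def .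
  qed
  moreover have "(\<integral>x. D x - Dh x \<partial>M) = integral\<^sup>L M D - integral\<^sup>L M Dh" using iD iDh by simp
  ultimately have "integral\<^sup>L M A \<le> integral\<^sup>L M Bf + integral\<^sup>L M E" using le o1 o2 by linarith
  thus ?thesis unfolding lp_objective_def A_def Bf_def E_def .
qed

end


lemma tri2: "\<bar>u - v\<bar> \<le> e / 2 \<Longrightarrow> \<bar>v - w\<bar> \<le> a / 2 \<Longrightarrow> \<bar>u - w\<bar> \<le> (a + e) / 2"
  for u v w a e :: real unfolding add_divide_distrib by linarith

lemma quad: "\<bar>u - a\<bar> \<le> e / 2 \<Longrightarrow> \<bar>u' - a'\<bar> \<le> e / 2 \<Longrightarrow> \<bar>u - q\<bar> \<le> al / 2 \<Longrightarrow> \<bar>u' - q\<bar> \<le> al / 2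
   \<Longrightarrow> \<bar>a - a'\<bar> \<le> al + e"
  for u a e u' a' q al :: real by linarith

lemma lin3: "X \<le> A + P \<Longrightarrow> P \<le> Q \<Longrightarrow> v = A \<Longrightarrow> X - Q \<le> v"
  for X A P Q v :: real by linarith

lemma unit01: "0 \<le> a \<Longrightarrow> a \<le> 1 \<Longrightarrow> 0 \<le> a' \<Longrightarrow> a' \<le> 1 \<Longrightarrow> \<bar>a - a'\<bar> \<le> 1"
  for a a' :: real by linarith

theorem theorem2:
  fixes M :: "'x measure"
    and r :: "'x \<Rightarrow> 'y::finite \<Rightarrow> real"
    and g :: "'x \<Rightarrow> nat \<Rightarrow> real"
    and K C :: nat
    and yc :: "nat \<Rightarrow> 'y"
    and Ic :: "nat \<Rightarrow> nat set"
    and \<alpha> :: real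
  assumes P: "prob_space M"
    and K_pos: "0 < K"
    and r_meas: "\<forall>y. (\<lambda>x. r x y) \<in> borel_measurable M"
    and r_nonneg: "\<forall>x\<in>space M. \<forall>y. 0 \<le> r x y"
    and r_bdd: "\<exists>B. \<forall>x\<in>space M. \<forall>y. r x y \<le> B"
    and g_meas: "\<forall>k<K. (\<lambda>x. g x k) \<in> borel_measurable M"
    and g_range: "\<forall>x\<in>space M. \<forall>k<K. 0 \<le> g x k \<and> g x k \<le> 1"
    and g_pos: "\<forall>k<K. 0 < (\<integral>x. g x k \<partial>M)"
    and Ic_sub: "\<forall>c<C. Ic c \<subseteq> {..<K}"
    and \<alpha>_range: "0 \<le> \<alpha>" "\<alpha> \<le> 1"
  shows
    "(\<forall>rh \<pi>h.
        (\<forall>y. (\<lambda>x. rh x y) \<in> borel_measurable M) \<and>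
        (\<forall>x\<in>space M. \<forall>y. 0 \<le> rh x y) \<and>
        integrable M (\<lambda>x. \<Sum>y\<in>UNIV. \<bar>rh x y - r x y\<bar>) \<and>
        lp_minimizer M rh g C yc Ic \<alpha> \<pi>h
        \<longrightarrow> lp_objective M r \<pi>h \<le> lp_value M r g C yc Ic \<alpha>
              + (\<integral>x. (\<Sum>y\<in>UNIV. \<bar>rh x y - r x y\<bar>) \<partial>M))
     \<and>
     (\<forall>gh.
        (\<forall>k<K. (\<lambda>x. gh x k) \<in> borel_measurable M) \<and>
        (\<forall>x\<in>space M. \<forall>k<K. 0 \<le> gh x k \<and> gh x k \<le> 1) \<and>
        (\<forall>k<K. 0 < (\<integral>x. gh x k \<partial>M))
        \<longrightarrow>
          eps_g M K gh g \<le> Max ((\<lambda>k. 2 * (\<integral>x. \<bar>gh x k - g x k\<bar> \<partial>M) / (\<integral>x. g x k \<partial>M)) ` {..<K})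
          \<and>
          (\<forall>\<pi>h. lp_minimizer M r gh C yc Ic \<alpha> \<pi>h \<longrightarrow>
             lp_objective M r \<pi>h \<le> lp_value M r g C yc Ic \<alpha>
               + 2 * sup_norm M r * min (1 - \<alpha>) (eps_g M K gh g / (\<alpha> + eps_g M K gh g))
             \<and>
             (\<forall>c<C. \<forall>k\<in>Ic c. \<forall>k'\<in>Ic c.
                \<bar>\<integral>x. (g x k / (\<integral>x'. g x' k \<partial>M) - g x k' / (\<integral>x'. g x' k' \<partial>M)) * \<pi>h x (yc c) \<partial>M\<bar>
                  \<le> min 1 (\<alpha> + eps_g M K gh g))))"
proof -
  interpret prob_space M by (rule P)
  obtain B where rB: "\<forall>x\<in>space M. \<forall>y. r x y \<le> B" using r_bdd by blast
  obtain y0 :: 'y where True by simp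
  define e :: "'x \<Rightarrow> 'y \<Rightarrow> real" where "e = (\<lambda>x y. if y = y0 then 1 else 0)"
  have em: "\<forall>y. (\<lambda>x. e x y) \<in> borel_measurable M" unfolding e_def by auto
  have en: "\<forall>x\<in>space M. \<forall>y. 0 \<le> e x y" unfolding e_def by auto
  have es: "\<forall>x\<in>space M. (\<Sum>y\<in>UNIV. e x y) = 1" unfolding e_def by auto
  have er: "\<forall>x\<in>space M. \<forall>y. 0 \<le> e x y \<and> e x y \<le> 1" unfolding e_def by auto
  have "lp_feasible M g C yc Ic \<alpha> (\<lambda>x y. 0 * e x y + (1 - 0) * (if y = y0 then 1 else 0))"
    by (rule mix_feasible[OF g_meas g_range g_pos Ic_sub em en es
          half_bound[OF g_meas g_range g_pos Ic_sub em er]]) (use \<alpha>_range in auto)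
  moreover have "(\<lambda>x y. 0 * e x y + (1 - 0) * (if y = y0 then 1 else 0)) = e"
    unfolding e_def by auto
  ultimately have e_feas: "lp_feasible M g C yc Ic \<alpha> e" by simp
  hence ne: "lp_objective M r ` {\<pi>. lp_feasible M g C yc Ic \<alpha> \<pi>} \<noteq> {}" by blast
  have S_nn: "0 \<le> sup_norm M r"
  proof -
    obtain x where x: "x \<in> space M" using not_empty by blast
    have "bdd_above {r x y | x y. x \<in> space M}"
      using rB by (auto intro!: bdd_aboveI[where M=B])
    hence "r x y0 \<le> sup_norm M r" unfolding sup_norm_def
      by (rule cSup_upper[rotated]) (use x in auto)
    moreover have "0 \<le> r x y0" using r_nonneg x by auto
    ultimately show ?thesis by linarith
  qed
  show ?thesis
  proof (intro conjI allI impI)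
    fix rh \<pi>h :: "'x \<Rightarrow> 'y \<Rightarrow> real"
    assume H: "(\<forall>y. (\<lambda>x. rh x y) \<in> borel_measurable M) \<and>
        (\<forall>x\<in>space M. \<forall>y. 0 \<le> rh x y) \<and>
        integrable M (\<lambda>x. \<Sum>y\<in>UNIV. \<bar>rh x y - r x y\<bar>) \<and>
        lp_minimizer M rh g C yc Ic \<alpha> \<pi>h"
    have "lp_objective M r \<pi>h - (\<integral>x. (\<Sum>y\<in>UNIV. \<bar>rh x y - r x y\<bar>) \<partial>M) \<le> lp_value M r g C yc Ic \<alpha>"
      unfolding lp_value_def
    proof (rule cInf_greatest[OF ne])
      fix v assume "v \<in> lp_objective M r ` {\<pi>. lp_feasible M g C yc Ic \<alpha> \<pi>}"
      then obtain \<pi> where f: "lp_feasible M g C yc Ic \<alpha> \<pi>" and v: "v = lp_objective M r \<pi>" by blast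
      have "lp_objective M r \<pi>h \<le> lp_objective M r \<pi> + (\<integral>x. (\<Sum>y\<in>UNIV. \<bar>rh x y - r x y\<bar>) \<partial>M)"
        by (rule part1[OF r_meas r_nonneg rB _ _ _ f]) (use H in auto)
      thus "lp_objective M r \<pi>h - (\<integral>x. (\<Sum>y\<in>UNIV. \<bar>rh x y - r x y\<bar>) \<partial>M) \<le> v" using v by simp
    qed
    thus "lp_objective M r \<pi>h \<le> lp_value M r g C yc Ic \<alpha> + (\<integral>x. (\<Sum>y\<in>UNIV. \<bar>rh x y - r x y\<bar>) \<partial>M)"
      by simp
  next
    fix gh :: "'x \<Rightarrow> nat \<Rightarrow> real"
    assume H: "(\<forall>k<K. (\<lambda>x. gh x k) \<in> borel_measurable M) \<and>
        (\<forall>x\<in>space M. \<forall>k<K. 0 \<le> gh x k \<and> gh x k \<le> 1) \<and>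
        (\<forall>k<K. 0 < (\<integral>x. gh x k \<partial>M))"
    have ghm: "\<forall>k<K. (\<lambda>x. gh x k) \<in> borel_measurable M" using H by blast
    have ghr: "\<forall>x\<in>space M. \<forall>k<K. 0 \<le> gh x k \<and> gh x k \<le> 1" using H by blast
    have ghp: "\<forall>k<K. 0 < (\<integral>x. gh x k \<partial>M)" using H by blast
    define \<epsilon> where "\<epsilon> = eps_g M K gh g"
    have eps_ge: "\<forall>k<K. (\<integral>x. \<bar>gh x k / (\<integral>x'. gh x' k \<partial>M) - g x k / (\<integral>x'. g x' k \<partial>M)\<bar> \<partial>M) \<le> \<epsilon>"
      unfolding \<epsilon>_def eps_g_def by (auto intro!: Max_ge)
    have eps_nn: "0 \<le> \<epsilon>"
    proof -
      have "0 \<le> (\<integral>x. \<bar>gh x 0 / (\<integral>x'. gh x' 0 \<partial>M) - g x 0 / (\<integral>x'. g x' 0 \<partial>M)\<bar> \<partial>M)"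
        by (rule integral_nonneg_AE) auto
      thus ?thesis using eps_ge[rule_format, OF K_pos] by linarith
    qed
    show "eps_g M K gh g \<le> Max ((\<lambda>k. 2 * (\<integral>x. \<bar>gh x k - g x k\<bar> \<partial>M) / (\<integral>x. g x k \<partial>M)) ` {..<K})"
      unfolding eps_g_def
    proof (subst Max_le_iff)
      show "finite ((\<lambda>k. \<integral>x. \<bar>gh x k / (\<integral>x'. gh x' k \<partial>M) - g x k / (\<integral>x'. g x' k \<partial>M)\<bar> \<partial>M) ` {..<K})" by simp
      show "(\<lambda>k. \<integral>x. \<bar>gh x k / (\<integral>x'. gh x' k \<partial>M) - g x k / (\<integral>x'. g x' k \<partial>M)\<bar> \<partial>M) ` {..<K} \<noteq> {}"
        using K_pos by auto
      show "\<forall>a\<in>(\<lambda>k. \<integral>x. \<bar>gh x k / (\<integral>x'. gh x' k \<partial>M) - g x k / (\<integral>x'. g x' k \<partial>M)\<bar> \<partial>M) ` {..<K}.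
          a \<le> Max ((\<lambda>k. 2 * (\<integral>x. \<bar>gh x k - g x k\<bar> \<partial>M) / (\<integral>x. g x k \<partial>M)) ` {..<K})"
      proof
        fix a assume "a \<in> (\<lambda>k. \<integral>x. \<bar>gh x k / (\<integral>x'. gh x' k \<partial>M) - g x k / (\<integral>x'. g x' k \<partial>M)\<bar> \<partial>M) ` {..<K}"
        then obtain k where k: "k < K" and a: "a = (\<integral>x. \<bar>gh x k / (\<integral>x'. gh x' k \<partial>M) - g x k / (\<integral>x'. g x' k \<partial>M)\<bar> \<partial>M)" by auto
        have "a \<le> 2 * (\<integral>x. \<bar>gh x k - g x k\<bar> \<partial>M) / (\<integral>x. g x k \<partial>M)"
          unfolding a by (rule ratio_bound[of g k gh]) (use g_meas g_range g_pos ghm ghr ghp k in auto)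
        also have "\<dots> \<le> Max ((\<lambda>k. 2 * (\<integral>x. \<bar>gh x k - g x k\<bar> \<partial>M) / (\<integral>x. g x k \<partial>M)) ` {..<K})"
          using k by (intro Max_ge) auto
        finally show "a \<le> Max ((\<lambda>k. 2 * (\<integral>x. \<bar>gh x k - g x k\<bar> \<partial>M) / (\<integral>x. g x k \<partial>M)) ` {..<K})" .
      qed
    qed
    have shiftk: "\<And>k p. k < K \<Longrightarrow> p \<in> borel_measurable M \<Longrightarrow> \<forall>x\<in>space M. 0 \<le> p x \<and> p x \<le> 1 \<Longrightarrow>
       \<bar>(\<integral>x. gh x k / (\<integral>x'. gh x' k \<partial>M) * p x \<partial>M) - (\<integral>x. g x k / (\<integral>x'. g x' k \<partial>M) * p x \<partial>M)\<bar> \<le> \<epsilon> / 2"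
    proof -
      fix k and p :: "'x \<Rightarrow> real" assume k: "k < K" and pm: "p \<in> borel_measurable M" and pr: "\<forall>x\<in>space M. 0 \<le> p x \<and> p x \<le> 1"
      have "\<bar>(\<integral>x. gh x k / (\<integral>x'. gh x' k \<partial>M) * p x \<partial>M) - (\<integral>x. g x k / (\<integral>x'. g x' k \<partial>M) * p x \<partial>M)\<bar>
         \<le> (\<integral>x. \<bar>gh x k / (\<integral>x'. gh x' k \<partial>M) - g x k / (\<integral>x'. g x' k \<partial>M)\<bar> \<partial>M) / 2"
        by (rule shift[of g k gh p]) (use g_meas g_range g_pos ghm ghr ghp k pm pr in auto)
      thus "\<bar>(\<integral>x. gh x k / (\<integral>x'. gh x' k \<partial>M) * p x \<partial>M) - (\<integral>x. g x k / (\<integral>x'. g x' k \<partial>M) * p x \<partial>M)\<bar> \<le> \<epsilon> / 2"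
        using eps_ge k by fastforce
    qed
    fix \<pi>h assume mini: "lp_minimizer M r gh C yc Ic \<alpha> \<pi>h"
    have fh: "lp_feasible M gh C yc Ic \<alpha> \<pi>h" using mini unfolding lp_minimizer_def by blast
    have phm: "\<forall>y. (\<lambda>x. \<pi>h x y) \<in> borel_measurable M" and phn: "\<forall>x\<in>space M. \<forall>y. 0 \<le> \<pi>h x y"
      and phs: "\<forall>x\<in>space M. (\<Sum>y\<in>UNIV. \<pi>h x y) = 1" using fh unfolding lp_feasible_def by auto
    have phr: "\<forall>x\<in>space M. \<forall>y. 0 \<le> \<pi>h x y \<and> \<pi>h x y \<le> 1" using phn pi_le1[OF phn phs] by auto
    obtain qh where qh: "\<forall>c<C. \<forall>k\<in>Ic c. \<bar>(\<integral>x. gh x k / (\<integral>x'. gh x' k \<partial>M) * \<pi>h x (yc c) \<partial>M) - qh c\<bar> \<le> \<alpha> / 2"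
      using fh unfolding lp_feasible_def by blast
    show "lp_objective M r \<pi>h \<le> lp_value M r g C yc Ic \<alpha>
               + 2 * sup_norm M r * min (1 - \<alpha>) (eps_g M K gh g / (\<alpha> + eps_g M K gh g))"
    proof -
      let ?m = "min (1 - \<alpha>) (\<epsilon> / (\<alpha> + \<epsilon>))"
      have "lp_objective M r \<pi>h - 2 * sup_norm M r * ?m \<le> lp_value M r g C yc Ic \<alpha>"
        unfolding lp_value_def
      proof (rule cInf_greatest[OF ne])
        fix v assume "v \<in> lp_objective M r ` {\<pi>. lp_feasible M g C yc Ic \<alpha> \<pi>}"
        then obtain \<pi> where f: "lp_feasible M g C yc Ic \<alpha> \<pi>" and v: "v = lp_objective M r \<pi>" by blast
        have pm: "\<forall>y. (\<lambda>x. \<pi> x y) \<in> borel_measurable M" and pn: "\<forall>x\<in>space M. \<forall>y. 0 \<le> \<pi> x y"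
          and ps: "\<forall>x\<in>space M. (\<Sum>y\<in>UNIV. \<pi> x y) = 1" using f unfolding lp_feasible_def by auto
        have pr: "\<forall>x\<in>space M. \<forall>y. 0 \<le> \<pi> x y \<and> \<pi> x y \<le> 1" using pn pi_le1[OF pn ps] by auto
        obtain q where q: "\<forall>c<C. \<forall>k\<in>Ic c. \<bar>(\<integral>x. g x k / (\<integral>x'. g x' k \<partial>M) * \<pi> x (yc c) \<partial>M) - q c\<bar> \<le> \<alpha> / 2"
          using f unfolding lp_feasible_def by blast
        have b1: "lp_objective M r \<pi>h \<le> lp_objective M r \<pi> + (1 - \<alpha>) * sup_norm M r"
          by (rule mix_bound[OF r_meas r_nonneg rB ghm ghr ghp Ic_sub mini pm pn ps
                half_bound[OF ghm ghr ghp Ic_sub pm pr]]) (use \<alpha>_range in auto)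
        have q2: "\<forall>c<C. \<forall>k\<in>Ic c. \<bar>(\<integral>x. gh x k / (\<integral>x'. gh x' k \<partial>M) * \<pi> x (yc c) \<partial>M) - q c\<bar> \<le> (\<alpha> + \<epsilon>) / 2"
        proof (intro allI impI ballI)
          fix c k assume c: "c < C" and k: "k \<in> Ic c"
          have kK: "k < K" using Ic_sub c k by auto
          have "\<bar>(\<integral>x. gh x k / (\<integral>x'. gh x' k \<partial>M) * \<pi> x (yc c) \<partial>M) - (\<integral>x. g x k / (\<integral>x'. g x' k \<partial>M) * \<pi> x (yc c) \<partial>M)\<bar> \<le> \<epsilon> / 2"
            by (rule shiftk[OF kK]) (use pm pr in auto)
          moreover have "\<bar>(\<integral>x. g x k / (\<integral>x'. g x' k \<partial>M) * \<pi> x (yc c) \<partial>M) - q c\<bar> \<le> \<alpha> / 2" using q c k by auto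
          ultimately show "\<bar>(\<integral>x. gh x k / (\<integral>x'. gh x' k \<partial>M) * \<pi> x (yc c) \<partial>M) - q c\<bar> \<le> (\<alpha> + \<epsilon>) / 2"
            by (rule tri2)
        qed
        define t where "t = (if \<alpha> + \<epsilon> = 0 then 1 else \<alpha> / (\<alpha> + \<epsilon>))"
        have t0: "0 \<le> t" and t1: "t \<le> 1" and t2: "t * (\<alpha> + \<epsilon>) \<le> \<alpha>" and t3: "1 - t = \<epsilon> / (\<alpha> + \<epsilon>)"
        proof -
          show "0 \<le> t" using \<alpha>_range eps_nn unfolding t_def by auto
          show "t \<le> 1" using \<alpha>_range eps_nn unfolding t_def by auto
          show "t * (\<alpha> + \<epsilon>) \<le> \<alpha>" using \<alpha>_range eps_nn unfolding t_def by auto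
          show "1 - t = \<epsilon> / (\<alpha> + \<epsilon>)"
          proof (cases "\<alpha> + \<epsilon> = 0")
            case True
            hence "\<epsilon> = 0" using \<alpha>_range eps_nn by linarith
            thus ?thesis using True unfolding t_def by simp
          next
            case False
            hence "1 - \<alpha> / (\<alpha> + \<epsilon>) = \<epsilon> / (\<alpha> + \<epsilon>)" by (simp add: field_simps)
            thus ?thesis using False unfolding t_def by simp
          qed
        qed
        have b2: "lp_objective M r \<pi>h \<le> lp_objective M r \<pi> + (1 - t) * sup_norm M r"
          by (rule mix_bound[OF r_meas r_nonneg rB ghm ghr ghp Ic_sub mini pm pn ps q2 t0 t1 t2])
        have "lp_objective M r \<pi>h \<le> lp_objective M r \<pi> + sup_norm M r * ?m"
          using b1 b2 t3 by (auto simp: min_def algebra_simps)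
        moreover have "sup_norm M r * ?m \<le> 2 * sup_norm M r * ?m"
          using S_nn \<alpha>_range eps_nn by (auto intro!: mult_right_mono)
        ultimately show "lp_objective M r \<pi>h - 2 * sup_norm M r * ?m \<le> v" using v by (rule lin3)
      qed
      thus ?thesis unfolding \<epsilon>_def by simp
    qed
    fix c assume c: "c < C"
    show "\<forall>k\<in>Ic c. \<forall>k'\<in>Ic c.
                \<bar>\<integral>x. (g x k / (\<integral>x'. g x' k \<partial>M) - g x k' / (\<integral>x'. g x' k' \<partial>M)) * \<pi>h x (yc c) \<partial>M\<bar>
                  \<le> min 1 (\<alpha> + eps_g M K gh g)"
    proof (intro ballI)
      fix k k' assume k: "k \<in> Ic c" and k': "k' \<in> Ic c"
      have kK: "k < K" and kK': "k' < K" using Ic_sub c k k' by auto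
      define p where "p = (\<lambda>x. \<pi>h x (yc c))"
      have pm: "p \<in> borel_measurable M" using phm unfolding p_def by auto
      have pr: "\<forall>x\<in>space M. 0 \<le> p x \<and> p x \<le> 1" using phr unfolding p_def by auto
      define a where "a = (\<integral>x. g x k / (\<integral>x'. g x' k \<partial>M) * p x \<partial>M)"
      define a' where "a' = (\<integral>x. g x k' / (\<integral>x'. g x' k' \<partial>M) * p x \<partial>M)"
      have ia: "integrable M (\<lambda>x. g x k / (\<integral>x'. g x' k \<partial>M) * p x)"
        by (rule wp_facts(1)[of g k]) (use g_meas g_range g_pos kK pm pr in auto)
      have ia': "integrable M (\<lambda>x. g x k' / (\<integral>x'. g x' k' \<partial>M) * p x)"
        by (rule wp_facts(1)[of g k']) (use g_meas g_range g_pos kK' pm pr in auto)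
      have eq: "(\<integral>x. (g x k / (\<integral>x'. g x' k \<partial>M) - g x k' / (\<integral>x'. g x' k' \<partial>M)) * p x \<partial>M) = a - a'"
      proof -
        have "(\<integral>x. (g x k / (\<integral>x'. g x' k \<partial>M) - g x k' / (\<integral>x'. g x' k' \<partial>M)) * p x \<partial>M)
            = (\<integral>x. g x k / (\<integral>x'. g x' k \<partial>M) * p x - g x k' / (\<integral>x'. g x' k' \<partial>M) * p x \<partial>M)"
          by (simp add: left_diff_distrib)
        also have "\<dots> = a - a'" unfolding a_def a'_def by (rule Bochner_Integration.integral_diff[OF ia ia'])
        finally show ?thesis .
      qed
      have a01: "0 \<le> a" "a \<le> 1" unfolding a_def
        by (rule wp_facts(2)[of g k], (use g_meas g_range g_pos kK pm pr in auto)[5])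
           (rule wp_facts(3)[of g k], (use g_meas g_range g_pos kK pm pr in auto)[5])
      have a01': "0 \<le> a'" "a' \<le> 1" unfolding a'_def
        by (rule wp_facts(2)[of g k'], (use g_meas g_range g_pos kK' pm pr in auto)[5])
           (rule wp_facts(3)[of g k'], (use g_meas g_range g_pos kK' pm pr in auto)[5])
      have s1: "\<bar>(\<integral>x. gh x k / (\<integral>x'. gh x' k \<partial>M) * p x \<partial>M) - a\<bar> \<le> \<epsilon> / 2"
        unfolding a_def by (rule shiftk[OF kK pm pr])
      have s2: "\<bar>(\<integral>x. gh x k' / (\<integral>x'. gh x' k' \<partial>M) * p x \<partial>M) - a'\<bar> \<le> \<epsilon> / 2"
        unfolding a'_def by (rule shiftk[OF kK' pm pr])
      have h1: "\<bar>(\<integral>x. gh x k / (\<integral>x'. gh x' k \<partial>M) * p x \<partial>M) - qh c\<bar> \<le> \<alpha> / 2"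
        using qh c k unfolding p_def by auto
      have h2: "\<bar>(\<integral>x. gh x k' / (\<integral>x'. gh x' k' \<partial>M) * p x \<partial>M) - qh c\<bar> \<le> \<alpha> / 2"
        using qh c k' unfolding p_def by auto
      have "\<bar>a - a'\<bar> \<le> 1" using a01 a01' by (intro unit01)
      moreover have "\<bar>a - a'\<bar> \<le> \<alpha> + \<epsilon>" using s1 s2 h1 h2 by (rule quad)
      ultimately show "\<bar>\<integral>x. (g x k / (\<integral>x'. g x' k \<partial>M) - g x k' / (\<integral>x'. g x' k' \<partial>M)) * \<pi>h x (yc c) \<partial>M\<bar>
                  \<le> min 1 (\<alpha> + eps_g M K gh g)"
        using eq unfolding p_def \<epsilon>_def by simp
    qed
  qed
qed


end
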